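(* Let $G$ be a connected graph on $n$ vertices with maximum degree $\Delta\geq 2$. Then \[ \log_\Delta\Big(\frac{n+1}{2}\Big)\leq \operatorname{cdim}(G). \]
   Context: All graphs are finite, simple, undirected and nonempty. For distinct vertices $v,w$, $\kappa(v,w)$ is the maximum number of internally vertex-disjoint $v$–$w$ paths (an edge $vw$ counts as one such path); $\kappa(v,v)=\infty$. For an ordered vertex set $W=(w_1,\ldots,w_k)$, $r_G(v,W)=[\kappa(v,w_1),\ldots,\kappa(v,w_k)]$. $W$ is resolving if $r_G(v_1,W)=r_G(v_2,W)$ implies $v_1=v_2$. The connectivity dimension $\operatorname{cdim}(G)$ is the minimum cardinality of a resolving set. *)

theory Defs
  imports Complex_Main "HOL-Library.Extended_Nat"
begin

definition simple_graph :: "'a set \<Rightarrow> ('a \<Rightarrow> 'a \<Rightarrow> bool) \<Rightarrow> bool" where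
  "simple_graph V E \<longleftrightarrow> finite V \<and> V \<noteq> {} \<and>
     (\<forall>u v. E u v \<longrightarrow> u \<in> V \<and> v \<in> V) \<and>
     (\<forall>u v. E u v \<longrightarrow> E v u) \<and> (\<forall>u. \<not> E u u)"

definition connected_graph :: "'a set \<Rightarrow> ('a \<Rightarrow> 'a \<Rightarrow> bool) \<Rightarrow> bool" where
  "connected_graph V E \<longleftrightarrow> (\<forall>u\<in>V. \<forall>v\<in>V. E\<^sup>*\<^sup>* u v)"

definition degree :: "'a set \<Rightarrow> ('a \<Rightarrow> 'a \<Rightarrow> bool) \<Rightarrow> 'a \<Rightarrow> nat" where
  "degree V E v = card {u \<in> V. E v u}"

definition max_degree :: "'a set \<Rightarrow> ('a \<Rightarrow> 'a \<Rightarrow> bool) \<Rightarrow> nat" where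
  "max_degree V E = Max (degree V E ` V)"

definition is_path :: "('a \<Rightarrow> 'a \<Rightarrow> bool) \<Rightarrow> 'a \<Rightarrow> 'a \<Rightarrow> 'a list \<Rightarrow> bool" where
  "is_path E v w p \<longleftrightarrow> p \<noteq> [] \<and> hd p = v \<and> last p = w \<and> distinct p \<and>
     (\<forall>i. Suc i < length p \<longrightarrow> E (p ! i) (p ! Suc i))"

definition interior :: "'a list \<Rightarrow> 'a set" where
  "interior p = set (butlast (tl p))"

definition kappa :: "('a \<Rightarrow> 'a \<Rightarrow> bool) \<Rightarrow> 'a \<Rightarrow> 'a \<Rightarrow> enat" where
  "kappa E v w = (if v = w then \<infinity> else
     Sup {enat (card P) | P. finite P \<and> (\<forall>p\<in>P. is_path E v w p) \<and>
            (\<forall>p\<in>P. \<forall>q\<in>P. p \<noteq> q \<longrightarrow> interior p \<inter> interior q = {})})"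

(* resolving set: the vector r(v,W) = [kappa(v,w_1),...,kappa(v,w_k)] determines v.
   Ordering of W is irrelevant, so W is taken as a set. *)
definition resolving :: "'a set \<Rightarrow> ('a \<Rightarrow> 'a \<Rightarrow> bool) \<Rightarrow> 'a set \<Rightarrow> bool" where
  "resolving V E W \<longleftrightarrow> W \<subseteq> V \<and>
     (\<forall>v1\<in>V. \<forall>v2\<in>V. (\<forall>w\<in>W. kappa E v1 w = kappa E v2 w) \<longrightarrow> v1 = v2)"

definition cdim :: "'a set \<Rightarrow> ('a \<Rightarrow> 'a \<Rightarrow> bool) \<Rightarrow> nat" where
  "cdim V E = (LEAST k. \<exists>W. resolving V E W \<and> card W = k)"

end

theory Submission
  imports Defs "HOL-Library.FuncSet"
begin

lemma path_basic:
  assumes "is_path E v w p" "v \<noteq> w"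
  shows "length p \<ge> 2" "p ! 0 = v" "E v (p ! 1)"
proof -
  have ne: "p \<noteq> []" and h: "hd p = v" and l: "last p = w"
    using assms unfolding is_path_def by auto
  show "length p \<ge> 2"
  proof (rule ccontr)
    assume "\<not> length p \<ge> 2"
    then have "length p = 1" using ne by (cases p) (auto simp: not_le)
    then obtain a where "p = [a]" by (cases p) auto
    then show False using h l assms(2) by simp
  qed
  then show "p ! 0 = v" using h ne by (simp add: hd_conv_nth)
  then show "E v (p ! 1)" using assms(1) \<open>length p \<ge> 2\<close> unfolding is_path_def
    by (metis One_nat_def Suc_1 Suc_le_eq)
qed

lemma path_second_w:
  assumes "is_path E v w p" "v \<noteq> w" "p ! 1 = w"
  shows "p = [v, w]"
proof -
  have L: "length p \<ge> 2" "p ! 0 = v" using path_basic assms by auto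
  have ne: "p \<noteq> []" and l: "last p = w" and d: "distinct p"
    using assms unfolding is_path_def by auto
  have "p ! (length p - 1) = w" using l ne by (simp add: last_conv_nth)
  then have "p ! (length p - 1) = p ! 1" using assms(3) by simp
  then have "length p - 1 = 1" using d L(1) nth_eq_iff_index_eq[OF d] by auto
  then have "length p = 2" by simp
  then show ?thesis using L assms(3)
    by (metis (no_types, lifting) One_nat_def Suc_1 length_0_conv length_Suc_conv nth_Cons_0
        nth_Cons_Suc)
qed

lemma path_second_interior:
  assumes "is_path E v w p" "v \<noteq> w" "p ! 1 \<noteq> w"
  shows "p ! 1 \<in> interior p"
proof -
  have L: "length p \<ge> 2" using path_basic assms by auto
  have ne: "p \<noteq> []" and l: "last p = w"
    using assms unfolding is_path_def by auto
  obtain a t where t: "p = a # t" using ne by (cases p) auto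
  obtain u rest where "t = u # rest" using L t by (cases t) auto
  with t have p: "p = a # u # rest" by simp
  have "rest \<noteq> []" using p l assms(3) by auto
  then show ?thesis unfolding interior_def using p by simp
qed

lemma kappa_le:
  assumes sg: "simple_graph V E" and "v \<noteq> w"
  shows "kappa E v w \<le> enat (degree V E v)"
  unfolding kappa_def using assms(2)
proof (simp, intro Sup_least, clarsimp)
  fix P assume fP: "finite P" and pa: "\<forall>p\<in>P. is_path E v w p"
    and dj: "\<forall>p\<in>P. \<forall>q\<in>P. p \<noteq> q \<longrightarrow> interior p \<inter> interior q = {}"
  have fin: "finite {u \<in> V. E v u}" using sg unfolding simple_graph_def by auto
  have "card P \<le> card {u \<in> V. E v u}"
  proof (rule card_inj_on_le[where f = "\<lambda>p. p ! 1"])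
    show "inj_on (\<lambda>p. p ! 1) P"
    proof (rule inj_onI)
      fix p q assume pq: "p \<in> P" "q \<in> P" "p ! 1 = q ! 1"
      show "p = q"
      proof (cases "p ! 1 = w")
        case True
        then show ?thesis using path_second_w pa pq assms(2) by metis
      next
        case False
        then have "p ! 1 \<in> interior p" "q ! 1 \<in> interior q"
          using path_second_interior pa pq assms(2) by metis+
        then show ?thesis using dj pq by force
      qed
    qed
    show "(\<lambda>p. p ! 1) ` P \<subseteq> {u \<in> V. E v u}"
    proof
      fix u assume "u \<in> (\<lambda>p. p ! 1) ` P"
      then obtain p where p: "p \<in> P" "u = p ! 1" by blast
      have "E v u" using path_basic(3)[OF bspec[OF pa p(1)] assms(2)] p(2) by simp
      moreover have "u \<in> V" using \<open>E v u\<close> sg unfolding simple_graph_def by blast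
      ultimately show "u \<in> {u \<in> V. E v u}" by simp
    qed
  qed (rule fin)
  then show "card P \<le> degree V E v" unfolding degree_def by simp
qed

lemma path_exists:
  assumes "E\<^sup>*\<^sup>* u v"
  shows "u \<noteq> v \<Longrightarrow> \<exists>p. is_path E u v p"
  using assms
proof (induction rule: converse_rtranclp_induct)
  case base
  then show ?case by simp
next
  case (step u y)
  show ?case
  proof (cases "y = v")
    case True
    then have "is_path E u v [u, v]" using step unfolding is_path_def
      by (auto simp: less_Suc_eq)
    then show ?thesis by blast
  next
    case False
    then obtain p where p: "is_path E y v p" using step by blast
    have ne: "p \<noteq> []" and h: "hd p = y" and l: "last p = v" and d: "distinct p"
      and ed: "\<forall>i. Suc i < length p \<longrightarrow> E (p ! i) (p ! Suc i)"
      using p unfolding is_path_def by auto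
    show ?thesis
    proof (cases "u \<in> set p")
      case True
      then obtain i where i: "i < length p" "p ! i = u" by (metis in_set_conv_nth)
      have "is_path E u v (drop i p)" unfolding is_path_def
        using i ne l d ed by (auto simp: hd_drop_conv_nth last_drop)
      then show ?thesis by blast
    next
      case False
      have p0: "p ! 0 = y" using h ne by (simp add: hd_conv_nth)
      have "is_path E u v (u # p)" unfolding is_path_def
      proof (intro conjI allI impI)
        fix j assume j: "Suc j < length (u # p)"
        show "E ((u # p) ! j) ((u # p) ! Suc j)"
        proof (cases j)
          case 0 then show ?thesis using p0 step(1) by simp
        next
          case (Suc k) then show ?thesis using ed j by simp
        qed
      qed (use ne l d False in auto)
      then show ?thesis by blast
    qed
  qed
qed

lemma kappa_ge:
  assumes "connected_graph V E" "v \<in> V" "w \<in> V" "v \<noteq> w"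
  shows "1 \<le> kappa E v w"
proof -
  obtain p where p: "is_path E v w p"
    using path_exists[of E v w] assms unfolding connected_graph_def by blast
  have "enat (card {p}) \<in> {enat (card P) | P. finite P \<and> (\<forall>p\<in>P. is_path E v w p) \<and>
            (\<forall>p\<in>P. \<forall>q\<in>P. p \<noteq> q \<longrightarrow> interior p \<inter> interior q = {})}"
    using p by blast
  then have "enat (card {p}) \<le> Sup {enat (card P) | P. finite P \<and> (\<forall>p\<in>P. is_path E v w p) \<and>
            (\<forall>p\<in>P. \<forall>q\<in>P. p \<noteq> q \<longrightarrow> interior p \<inter> interior q = {})}"
    by (rule Sup_upper)
  then show ?thesis unfolding kappa_def using assms(4) by (simp add: one_enat_def)
qed

theorem mainTheorem4:
  fixes V :: "'a set" and E :: "'a \<Rightarrow> 'a \<Rightarrow> bool"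
  assumes "simple_graph V E" and "connected_graph V E"
    and "max_degree V E \<ge> 2"
  shows "log (real (max_degree V E)) ((real (card V) + 1) / 2) \<le> real (cdim V E)"
proof -
  define D where "D = max_degree V E"
  have finV: "finite V" and neV: "V \<noteq> {}" using assms(1) unfolding simple_graph_def by auto
  have degD: "degree V E v \<le> D" if "v \<in> V" for v
    unfolding D_def max_degree_def using finV that by (intro Max_ge) auto
  have kap: "\<exists>m. kappa E v w = enat m \<and> 1 \<le> m \<and> m \<le> D"
    if "v \<in> V" "w \<in> V" "v \<noteq> w" for v w
  proof -
    have "enat (degree V E v) \<le> enat D" using degD[OF that(1)] by simp
    with kappa_le[OF assms(1) that(3)] have a: "kappa E v w \<le> enat D" by (rule order_trans)
    have b: "1 \<le> kappa E v w" using kappa_ge[OF assms(2) that] .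
    from a obtain m where m: "kappa E v w = enat m" using enat_ile by blast
    then show ?thesis using a b by (auto simp: one_enat_def)
  qed
  have resV: "resolving V E V" unfolding resolving_def
  proof (intro conjI ballI impI)
    fix v1 v2 assume v: "v1 \<in> V" "v2 \<in> V" and eq: "\<forall>w\<in>V. kappa E v1 w = kappa E v2 w"
    show "v1 = v2"
    proof (rule ccontr)
      assume ne: "v1 \<noteq> v2"
      have "kappa E v1 v1 = \<infinity>" unfolding kappa_def by simp
      moreover obtain m where "kappa E v2 v1 = enat m" using kap[of v2 v1] v ne by blast
      ultimately show False using eq v by auto
    qed
  qed simp
  define k where "k = cdim V E"
  have "\<exists>W. resolving V E W \<and> card W = k"
    unfolding k_def cdim_def by (rule LeastI_ex) (use resV in blast)
  then obtain W where W: "resolving V E W" "card W = k" by blast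
  have WV: "W \<subseteq> V" using W unfolding resolving_def by simp
  have finW: "finite W" using WV finV finite_subset by blast
  define g where "g v = restrict (\<lambda>w. the_enat (kappa E v w)) W" for v
  have "card (V - W) \<le> card (PiE W (\<lambda>_. {1..D}))"
  proof (rule card_inj_on_le)
    show "inj_on g (V - W)"
    proof (rule inj_onI)
      fix v1 v2 assume v: "v1 \<in> V - W" "v2 \<in> V - W" and eq: "g v1 = g v2"
      have "\<forall>w\<in>W. kappa E v1 w = kappa E v2 w"
      proof
        fix w assume w: "w \<in> W"
        have "the_enat (kappa E v1 w) = the_enat (kappa E v2 w)"
          using fun_cong[OF eq, of w] w unfolding g_def by simp
        moreover obtain m1 where "kappa E v1 w = enat m1" using kap[of v1 w] v w WV by blast
        moreover obtain m2 where "kappa E v2 w = enat m2" using kap[of v2 w] v w WV by blast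
        ultimately show "kappa E v1 w = kappa E v2 w" by simp
      qed
      then show "v1 = v2" using W(1) v unfolding resolving_def by blast
    qed
    show "g ` (V - W) \<subseteq> PiE W (\<lambda>_. {1..D})"
    proof
      fix f assume "f \<in> g ` (V - W)"
      then obtain v where v: "v \<in> V - W" "f = g v" by blast
      have "\<forall>w\<in>W. the_enat (kappa E v w) \<in> {1..D}"
      proof
        fix w assume w: "w \<in> W"
        obtain m where "kappa E v w = enat m \<and> 1 \<le> m \<and> m \<le> D" using kap[of v w] v w WV by blast
        then show "the_enat (kappa E v w) \<in> {1..D}" by simp
      qed
      then show "f \<in> PiE W (\<lambda>_. {1..D})" using v unfolding g_def by auto
    qed
  qed (simp add: finW finite_PiE)
  also have "\<dots> = D ^ k" using finW W(2) by (simp add: card_PiE)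
  finally have c1: "card (V - W) \<le> D ^ k" .
  have "card (V - W) = card V - card W" by (rule card_Diff_subset[OF finW WV])
  moreover have "card W \<le> card V" by (rule card_mono[OF finV WV])
  ultimately have n: "card V \<le> k + D ^ k" using c1 W(2) by simp
  have "k < 2 ^ k" by (rule less_exp)
  also have "(2::nat) ^ k \<le> D ^ k" using assms(3) D_def by (simp add: power_mono)
  finally have "card V + 1 \<le> 2 * D ^ k" using n by simp
  then have "real (card V + 1) \<le> real (2 * D ^ k)" by (simp only: of_nat_le_iff)
  then have r: "(real (card V) + 1) / 2 \<le> real D ^ k" by simp
  have D1: "1 < real D" using assms(3) D_def by simp
  have pos: "0 < (real (card V) + 1) / 2" by simp
  have "(real (card V) + 1) / 2 \<le> real D powr real k"
    using r D1 by (simp add: powr_realpow)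
  then have "log (real D) ((real (card V) + 1) / 2) \<le> real k"
    using log_le_iff[OF D1 pos] by simp
  then show ?thesis unfolding D_def k_def .
qed

end
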